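(* Let $G$ be a finite abelian group. Then $\daleth^*(G) = \emptyset$ if and only if $|G|\le 2$. If $|G| \ge 3$, then $\daleth^*(G)$ is a finite interval of integers with $\min \daleth^*(G) = 3$.
   Context: For an abelian group $G$, $\mathcal B(G)$ is the monoid of zero-sum sequences over $G$: finite unordered sequences (with repetition) of elements of $G$ whose sum is $0$, with concatenation as operation. Its atoms are the minimal zero-sum sequences. For $A\in\mathcal B(G)$, $\mathsf L(A)$ is the set of all $k$ such that $A$ is a product of $k$ atoms. $\daleth^*(G) := \{\min(\mathsf L(UV)\setminus\{2\}) : U,V \text{ atoms of } \mathcal B(G),\ |\mathsf L(UV)|>1\}$. *)

theory Defs
  imports "HOL-Library.Multiset"
begin

text \<open>Sequences over G are finite multisets of elements of G; the group G is the
  ambient type 'a of class ab_group_add (finite where needed).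
  B(G) is the monoid of zero-sum sequences under concatenation (multiset sum).\<close>

definition zero_sum :: "'a::ab_group_add multiset \<Rightarrow> bool" where
  "zero_sum A \<longleftrightarrow> sum_mset A = 0"

definition atom :: "'a::ab_group_add multiset \<Rightarrow> bool" where
  "atom A \<longleftrightarrow> zero_sum A \<and> A \<noteq> {#} \<and>
     (\<forall>S. S \<subseteq># A \<and> S \<noteq> {#} \<and> zero_sum S \<longrightarrow> S = A)"

definition lengths :: "'a::ab_group_add multiset \<Rightarrow> nat set" where
  "lengths A = {k. \<exists>F :: 'a multiset multiset.
      size F = k \<and> (\<forall>U \<in># F. atom U) \<and> sum_mset F = A}"

definition daleth_star :: "'a::ab_group_add itself \<Rightarrow> nat set" where
  "daleth_star (_ :: 'a itself) =
     {Min (lengths (U + V) - {2}) | U V :: 'a multiset.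
        atom U \<and> atom V \<and> card (lengths (U + V)) > 1}"

end

theory Submission
  imports Defs
begin

lemma atomD: assumes "atom W"
  shows "sum_mset W = 0" "W \<noteq> {#}"
    "\<And>S. S \<subseteq># W \<Longrightarrow> S \<noteq> {#} \<Longrightarrow> sum_mset S = 0 \<Longrightarrow> S = W"
  using assms unfolding atom_def zero_sum_def by auto

lemma atomI: assumes "sum_mset W = 0" "W \<noteq> {#}"
    "\<And>S. S \<subseteq># W \<Longrightarrow> S \<noteq> {#} \<Longrightarrow> sum_mset S = 0 \<Longrightarrow> S = W"
  shows "atom W"
  using assms unfolding atom_def zero_sum_def by auto

lemma size_sum_ge: "(\<forall>A\<in>#F. A \<noteq> {#}) \<Longrightarrow> size F \<le> size (sum_mset F)"
proof (induction F)
  case empty then show ?case by simp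
next
  case (add x F)
  then have "size x \<ge> 1" by (simp add: Suc_le_eq nonempty_has_size)
  with add show ?case by simp
qed

lemma lengths_bound: "lengths M \<subseteq> {..size M}"
  unfolding lengths_def using size_sum_ge atomD(2) by fastforce

lemma lengths_finite: "finite (lengths M)"
  using lengths_bound finite_subset by blast

lemma sum_empty_atoms: "(\<forall>W\<in>#F. atom W) \<Longrightarrow> sum_mset F = {#} \<Longrightarrow> F = {#}"
  using atomD(2) by (cases F) auto

lemma factor_atom:
  assumes "atom U" "\<forall>W\<in>#F. atom W" "sum_mset F = U"
  shows "F = {#U#}"
proof -
  have "F \<noteq> {#}" using assms atomD(2)[OF assms(1)] by auto
  then obtain W F0 where F: "F = add_mset W F0" by (metis multi_member_split multiset_nonemptyE)
  have "W \<subseteq># U" using assms(3) F by auto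
  moreover have "atom W" using assms(2) F by auto
  ultimately have "W = U" using atomD[OF assms(1)] atomD[of W] by blast
  then have "sum_mset F0 = {#}" using assms(3) F by simp
  then have "F0 = {#}" using sum_empty_atoms assms(2) F by auto
  then show ?thesis using F \<open>W = U\<close> by simp
qed

lemma two_in_lengths: "atom U \<Longrightarrow> atom V \<Longrightarrow> 2 \<in> lengths (U + V)"
  unfolding lengths_def by (rule CollectI, rule exI[of _ "{#U, V#}"]) auto

lemma zero_notin_lengths: "atom U \<Longrightarrow> 0 \<notin> lengths (U + V)"
  unfolding lengths_def using atomD(2) by auto

lemma one_notin_lengths: assumes "atom U" "atom V" shows "1 \<notin> lengths (U + V)"
proof
  assume "1 \<in> lengths (U + V)"
  then obtain F where "size F = 1" "\<forall>W\<in>#F. atom W" "sum_mset F = U + V"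
    unfolding lengths_def by auto
  then obtain W where W: "atom W" "W = U + V"
    by (metis One_nat_def add_mset_eq_single size_1_singleton_mset sum_mset.singleton union_single_eq_member)
  then have "U = W" using atomD(3)[OF W(1), of U] atomD[OF assms(1)] by auto
  then show False using W atomD(2)[OF assms(2)] by simp
qed

lemma split_aux1: "W + (F::'a multiset) = U + V \<Longrightarrow> F = (U - (W \<inter># U)) + (V - (W - (W \<inter># U)))"
  by (metis (mono_tags, lifting) add_diff_cancel_left add_diff_cancel_right
    diff_intersect_left_idem diff_subset_eq_self diff_union_cancelL
    multiset_diff_union_assoc subset_mset.diff_add_assoc2
    subset_mset.inf.cobounded1 subset_mset.inf.cobounded2)

lemma split_aux2: "W + (F::'a multiset) = U + V \<Longrightarrow> (W - (W \<inter># U)) \<subseteq># V"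
  by (metis subset_eq_diff_conv diff_intersect_left_idem Diff_eq_empty_iff_mset diff_add_zero add.commute)

lemma split_fact:
  "sum_mset (F::'a multiset multiset) = U + V \<Longrightarrow> \<exists>P. image_mset (\<lambda>p. fst p + snd p) P = F \<and>
     sum_mset (image_mset fst P) = U \<and> sum_mset (image_mset snd P) = V"
proof (induction F arbitrary: U V)
  case empty
  then have "U + V = {#}" by simp
  then have "U = {#}" "V = {#}" by (simp_all only: union_eq_empty)
  then show ?case by (intro exI[of _ "{#}"]) simp
next
  case (add W F)
  define A where "A = W \<inter># U"
  define B where "B = W - A"
  have eq: "sum_mset F = (U - A) + (V - B)" using add.prems unfolding A_def B_def
    using split_aux1[of W "sum_mset F" U V] by (simp add: add.commute)
  from add.IH[OF eq] obtain P where P: "image_mset (\<lambda>p. fst p + snd p) P = F"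
     "sum_mset (image_mset fst P) = U - A" "sum_mset (image_mset snd P) = V - B" by blast
  have AU: "A \<subseteq># U" unfolding A_def by simp
  have BV: "B \<subseteq># V" using add.prems unfolding A_def B_def
    using split_aux2[of W "sum_mset F" U V] by (simp add: add.commute)
  have "A + B = W" unfolding A_def B_def by (auto simp: multiset_eq_iff min_def)
  then show ?case using P AU BV
    by (intro exI[of _ "add_mset (A, B) P"]) simp
qed

lemma sum_mset_plus_image:
  "sum_mset (image_mset (\<lambda>p. f p + g p) P) = sum_mset (image_mset f P) + sum_mset (image_mset g P)"
  by (induction P) (auto simp: algebra_simps)

lemma sub_add_mset: "S \<subseteq># add_mset x M \<Longrightarrow> S \<subseteq># M \<or> (\<exists>S'. S = add_mset x S' \<and> S' \<subseteq># M)"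
proof (cases "x \<in># S")
  case True
  then obtain S' where "S = add_mset x S'" by (metis multi_member_split)
  moreover assume "S \<subseteq># add_mset x M"
  ultimately show ?thesis by auto
next
  case False
  assume "S \<subseteq># add_mset x M"
  have "S \<subseteq># M" unfolding subseteq_mset_def
  proof
    fix a show "count S a \<le> count M a"
    proof (cases "a = x")
      case True then show ?thesis using False by (simp add: not_in_iff)
    next
      case F: False
      from \<open>S \<subseteq># add_mset x M\<close> have "count S a \<le> count (add_mset x M) a"
        by (simp add: subseteq_mset_def)
      then show ?thesis using F by simp
    qed
  qed
  then show ?thesis by simp
qed

lemma add_split: "add_mset x N = A + B \<Longrightarrow>
   (\<exists>A'. A = add_mset x A' \<and> N = A' + B) \<or> (\<exists>B'. B = add_mset x B' \<and> N = A + B')"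
proof -
  assume h: "add_mset x N = A + B"
  have "x \<in># add_mset x N" by simp
  then have "x \<in># A \<or> x \<in># B" using h by simp
  then show ?thesis
  proof
    assume "x \<in># A" then obtain A' where "A = add_mset x A'" by (metis multi_member_split)
    then show ?thesis using h by auto
  next
    assume "x \<in># B" then obtain B' where "B = add_mset x B'" by (metis multi_member_split)
    then show ?thesis using h by auto
  qed
qed

lemma three_part: "add_mset g (add_mset h N) = T + S + Q \<Longrightarrow> T \<subseteq># N \<or> S \<subseteq># N \<or> Q \<subseteq># N"
proof -
  assume h: "add_mset g (add_mset h N) = T + S + Q"
  then have "add_mset g (add_mset h N) = T + (S + Q)" by (simp add: add.assoc)
  from add_split[OF this] show ?thesis
  proof (elim disjE exE conjE)
    fix T' assume T: "T = add_mset g T'" and e: "add_mset h N = T' + (S + Q)"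
    from add_split[OF e] show ?thesis
    proof (elim disjE exE conjE)
      fix T'' assume "N = T'' + (S + Q)" then show ?thesis by simp
    next
      fix X assume X: "S + Q = add_mset h X" "N = T' + X"
      from add_split[OF X(1)[symmetric]] show ?thesis using X(2)
        by (auto simp: add.commute add.left_commute)
    qed
  next
    fix X assume X: "S + Q = add_mset g X" and e: "add_mset h N = T + X"
    from add_split[OF e] show ?thesis
    proof (elim disjE exE conjE)
      fix T' assume N: "N = T' + X"
      from add_split[OF X[symmetric]] show ?thesis using N
        by (auto simp: add.commute add.left_commute)
    next
      fix X' assume X': "X = add_mset h X'" "N = T + X'" then show ?thesis by simp
    qed
  qed
qed


lemma sub0: "S \<subseteq># {#} \<Longrightarrow> S = {#}" by simp

lemma sub1: "S \<subseteq># {#w#} \<Longrightarrow> S = {#} \<or> S = {#w#}"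
  using sub_add_mset[of S w "{#}"] by auto

lemma sub2: "S \<subseteq># {#x, y#} \<Longrightarrow> S = {#} \<or> S = {#x#} \<or> S = {#y#} \<or> S = {#x, y#}"
proof -
  assume "S \<subseteq># {#x, y#}"
  from sub_add_mset[OF this] show ?thesis
  proof
    assume "S \<subseteq># {#y#}" then show ?thesis using sub1[of S y] by blast
  next
    assume "\<exists>S'. S = add_mset x S' \<and> S' \<subseteq># {#y#}"
    then obtain S' where "S = add_mset x S'" "S' \<subseteq># {#y#}" by blast
    then show ?thesis using sub1[of S' y] by auto
  qed
qed

lemma sub3: "S \<subseteq># {#x, y, z#} \<Longrightarrow> S = {#} \<or> S = {#x#} \<or> S = {#y#} \<or> S = {#z#} \<or>
   S = {#x, y#} \<or> S = {#x, z#} \<or> S = {#y, z#} \<or> S = {#x, y, z#}"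
proof -
  assume "S \<subseteq># {#x, y, z#}"
  from sub_add_mset[OF this] show ?thesis
  proof
    assume "S \<subseteq># {#y, z#}" then show ?thesis using sub2[of S y z] by blast
  next
    assume "\<exists>S'. S = add_mset x S' \<and> S' \<subseteq># {#y, z#}"
    then obtain S' where "S = add_mset x S'" "S' \<subseteq># {#y, z#}" by blast
    then show ?thesis using sub2[of S' y z] by auto
  qed
qed

lemma atom_pair: assumes "(x::'a::ab_group_add) \<noteq> 0" "x + y = 0" shows "atom {#x, y#}"
proof (rule atomI)
  have "y \<noteq> 0" using assms by auto
  fix S assume S: "S \<subseteq># {#x, y#}" "S \<noteq> {#}" "sum_mset S = 0"
  from sub2[OF S(1)] S(2,3) assms \<open>y \<noteq> 0\<close> show "S = {#x, y#}" by auto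
qed (use assms in auto)

lemma atom3: assumes "(x::'a::ab_group_add) \<noteq> 0" "y \<noteq> 0" "z \<noteq> 0" "x + y \<noteq> 0" "x + z \<noteq> 0" "y + z \<noteq> 0"
  "x + y + z = 0" shows "atom {#x, y, z#}"
proof (rule atomI)
  fix S assume S: "S \<subseteq># {#x, y, z#}" "S \<noteq> {#}" "sum_mset S = 0"
  from sub3[OF S(1)] S(2,3) assms show "S = {#x, y, z#}"
    by (elim disjE) (simp_all add: add.assoc)
qed (use assms in \<open>auto simp: add.assoc\<close>)

definition merge :: "'a::ab_group_add multiset \<Rightarrow> 'a \<Rightarrow> 'a \<Rightarrow> 'a multiset" where
  "merge M g h = add_mset (g + h) (M - {#g, h#})"

lemma merge_decomp: "{#g, h#} \<subseteq># M \<Longrightarrow> M = {#g, h#} + (M - {#g, h#})"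
  by (metis subset_mset.add_diff_inverse)

lemma merge_atom: assumes "atom W" "{#g, h#} \<subseteq># W" shows "atom (merge W g h)"
proof -
  define N where "N = W - {#g, h#}"
  have W: "W = {#g, h#} + N" unfolding N_def using merge_decomp[OF assms(2)] .
  have m: "merge W g h = add_mset (g + h) N" unfolding merge_def N_def ..
  have s0: "sum_mset W = 0" using atomD(1)[OF assms(1)] .
  show ?thesis unfolding m
  proof (rule atomI)
    show "sum_mset (add_mset (g + h) N) = 0" using s0 W by (simp add: add.assoc)
    show "add_mset (g + h) N \<noteq> {#}" by simp
    fix S assume S: "S \<subseteq># add_mset (g + h) N" "S \<noteq> {#}" "sum_mset S = 0"
    from sub_add_mset[OF S(1)] show "S = add_mset (g + h) N"
    proof
      assume SN: "S \<subseteq># N"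
      have "N \<subseteq># W" using W by simp
      with SN have "S \<subseteq># W" by (rule subset_mset.order_trans)
      then have "S = W" using atomD(3)[OF assms(1) _ S(2) S(3)] by blast
      then have "size W \<le> size N" using SN by (simp add: size_mset_mono)
      then show ?thesis using W by simp
    next
      assume "\<exists>S'. S = add_mset (g + h) S' \<and> S' \<subseteq># N"
      then obtain S' where S': "S = add_mset (g + h) S'" "S' \<subseteq># N" by blast
      have "{#g, h#} + S' \<subseteq># W" using W S'(2) by simp
      moreover have "sum_mset ({#g, h#} + S') = 0" using S(3) S'(1) by (simp add: add.assoc)
      ultimately have "{#g, h#} + S' = W" using atomD(3)[OF assms(1), of "{#g, h#} + S'"] by simp
      then have "S' = N" using W by simp
      then show ?thesis using S' by simp
    qed
  qed
qed

lemma exists_atom_sub: "X \<noteq> {#} \<Longrightarrow> sum_mset X = (0::'a::ab_group_add) \<Longrightarrow> \<exists>T. atom T \<and> T \<subseteq># X"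
proof (induction "size X" arbitrary: X rule: less_induct)
  case less
  show ?case
  proof (cases "atom X")
    case True then show ?thesis by blast
  next
    case False
    then obtain S where S: "S \<subseteq># X" "S \<noteq> {#}" "sum_mset S = 0" "S \<noteq> X"
      using less.prems unfolding atom_def zero_sum_def by blast
    then have "S \<subset># X" by simp
    then have "size S < size X" by (rule mset_subset_size)
    from less.hyps[OF this S(2,3)] obtain T where "atom T" "T \<subseteq># S" by blast
    then show ?thesis using S(1) by (meson subset_mset.order_trans)
  qed
qed

lemma unmerge:
  assumes gh: "{#g, h#} \<subseteq># M" and l: "l \<in> lengths (merge M g h)"
  shows "l \<in> lengths M \<or> Suc l \<in> lengths M"
proof -
  from l obtain F where F: "size F = l" "\<forall>W\<in>#F. atom W" "sum_mset F = merge M g h"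
    unfolding lengths_def by blast
  have "g + h \<in># sum_mset F" using F(3) unfolding merge_def by simp
  then obtain W' where W': "W' \<in># F" "g + h \<in># W'" by auto
  then obtain F0 where F0: "F = add_mset W' F0" by (metis multi_member_split)
  from W'(2) obtain N where N: "W' = add_mset (g + h) N" by (metis multi_member_split)
  define W'' where "W'' = {#g, h#} + N"
  have "add_mset (g + h) (M - {#g, h#}) = add_mset (g + h) (N + sum_mset F0)"
    using F(3) F0 N unfolding merge_def by simp
  then have "M - {#g, h#} = N + sum_mset F0" by simp
  then have M: "M = W'' + sum_mset F0" using merge_decomp[OF gh] unfolding W''_def
    by (simp add: add.assoc)
  have aW': "atom W'" using F(2) W'(1) by blast
  have sW'': "sum_mset W'' = 0" using atomD(1)[OF aW'] N unfolding W''_def by (simp add: add.assoc)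
  have nW'': "W'' \<noteq> {#}" unfolding W''_def by simp
  have aF0: "\<forall>W\<in>#F0. atom W" using F(2) F0 by auto
  have sizeF0: "size F0 + 1 = l" using F(1) F0 by simp
  have NW': "N \<subseteq># W'" using N by simp
  have sizeN: "size N < size W'" using N by simp
  have noN: "\<And>P. P \<subseteq># N \<Longrightarrow> P \<noteq> {#} \<Longrightarrow> sum_mset P = 0 \<Longrightarrow> False"
  proof -
    fix P assume P: "P \<subseteq># N" "P \<noteq> {#}" "sum_mset P = 0"
    then have "P \<subseteq># W'" using NW' by (meson subset_mset.order_trans)
    then have "P = W'" using atomD(3)[OF aW' _ P(2) P(3)] by blast
    then show False using P(1) sizeN by (metis leD size_mset_mono)
  qed
  show ?thesis
  proof (cases "atom W''")
    case True
    have "l \<in> lengths M" unfolding lengths_def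
      using True aF0 sizeF0 M by (intro CollectI exI[of _ "add_mset W'' F0"]) auto
    then show ?thesis ..
  next
    case False
    then obtain S where S: "S \<subseteq># W''" "S \<noteq> {#}" "sum_mset S = 0" "S \<noteq> W''"
      using sW'' nW'' unfolding atom_def zero_sum_def by blast
    then have "size S < size W''" by (simp add: mset_subset_size)
    from exists_atom_sub[OF S(2,3)] obtain T where T: "atom T" "T \<subseteq># S" by blast
    have TW: "T \<subseteq># W''" using T(2) S(1) by (meson subset_mset.order_trans)
    have "size T < size W''" using T(2) \<open>size S < size W''\<close> by (meson le_less_trans size_mset_mono)
    then have TneW: "T \<noteq> W''" by auto
    define R where "R = W'' - T"
    have WTR: "W'' = T + R" unfolding R_def using TW by (simp add: subset_mset.add_diff_inverse)
    have sR: "sum_mset R = 0" using sW'' atomD(1)[OF T(1)] WTR by simp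
    have aR: "atom R"
    proof (rule atomI[OF sR])
      show "R \<noteq> {#}" using TneW WTR by auto
      fix S2 assume S2: "S2 \<subseteq># R" "S2 \<noteq> {#}" "sum_mset S2 = 0"
      show "S2 = R"
      proof (rule ccontr)
        assume ne: "S2 \<noteq> R"
        define Q where "Q = R - S2"
        have RQ: "R = S2 + Q" unfolding Q_def using S2(1) by (simp add: subset_mset.add_diff_inverse)
        have Qne: "Q \<noteq> {#}" using ne RQ by auto
        have sQ: "sum_mset Q = 0" using sR S2(3) RQ by simp
        have "add_mset g (add_mset h N) = T + S2 + Q" using WTR RQ unfolding W''_def
          by (simp add: add.assoc)
        from three_part[OF this] show False
          using noN[of T] noN[of S2] noN[of Q] atomD[OF T(1)] S2 Qne sQ by blast
      qed
    qed
    have "Suc l \<in> lengths M" unfolding lengths_def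
      using T(1) aR aF0 sizeF0 M WTR by (intro CollectI exI[of _ "add_mset T (add_mset R F0)"]) (auto simp: add.assoc)
    then show ?thesis ..
  qed
qed

definition good :: "'a::ab_group_add multiset \<Rightarrow> 'a multiset \<Rightarrow> nat \<Rightarrow> bool" where
  "good U V k \<longleftrightarrow> atom U \<and> atom V \<and> 3 \<le> k \<and> k \<in> lengths (U + V) \<and>
     (\<forall>l\<in>lengths (U + V). 3 \<le> l \<longrightarrow> k \<le> l)"

lemma good_sym: "good U V k \<Longrightarrow> good V U k"
  by (simp add: good_def add.commute)

lemma lengths_ge3: assumes "atom U" "atom V" "l \<in> lengths (U + V)" "l \<noteq> 2" shows "3 \<le> l"
proof -
  have h0: "0 \<notin> lengths (U + V)" using zero_notin_lengths[OF assms(1)] .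
  have h1: "1 \<notin> lengths (U + V)" using one_notin_lengths[OF assms(1,2)] .
  have "l \<noteq> 0" using h0 assms(3) by metis
  moreover have "l \<noteq> 1" using h1 assms(3) by metis
  ultimately show ?thesis using assms(4) by arith
qed

lemma daleth_good: "k \<in> daleth_star TYPE('a::ab_group_add) \<longleftrightarrow> (\<exists>U V::'a multiset. good U V k)"
proof
  assume "k \<in> daleth_star TYPE('a)"
  then obtain U V :: "'a multiset" where UV: "k = Min (lengths (U + V) - {2})" "atom U" "atom V"
    "card (lengths (U + V)) > 1" unfolding daleth_star_def by blast
  let ?L = "lengths (U + V)"
  have fin: "finite (?L - {2})" using lengths_finite by blast
  have ne: "?L - {2} \<noteq> {}"
  proof
    assume "?L - {2} = {}"
    then have "?L \<subseteq> {2}" by blast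
    then have "card ?L \<le> card {2::nat}" by (intro card_mono) auto
    then have "card ?L \<le> 1" by simp
    then show False using UV(4) by simp
  qed
  have kin: "k \<in> ?L - {2}" using Min_in[OF fin ne] UV(1) by simp
  have "good U V k" unfolding good_def
  proof (intro conjI ballI impI)
    show "3 \<le> k" using kin lengths_ge3[OF UV(2,3)] by blast
    show "k \<in> ?L" using kin by blast
    fix l assume "l \<in> ?L" "3 \<le> l"
    then have "l \<in> ?L - {2}" by auto
    then show "k \<le> l" using Min_le[OF fin] UV(1) by simp
  qed (use UV in auto)
  then show "\<exists>U V::'a multiset. good U V k" by blast
next
  assume "\<exists>U V::'a multiset. good U V k"
  then obtain U V :: "'a multiset" where g: "good U V k" by blast
  let ?L = "lengths (U + V)"
  have g': "atom U" "atom V" "3 \<le> k" "k \<in> ?L" "\<forall>l\<in>?L. 3 \<le> l \<longrightarrow> k \<le> l"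
    using g unfolding good_def by auto
  have "{2, k} \<subseteq> ?L" using g' two_in_lengths[OF g'(1,2)] by auto
  then have "card {2, k} \<le> card ?L" using lengths_finite card_mono by blast
  moreover have "card {2, k} = 2" using g'(3) by simp
  ultimately have c: "card ?L > 1" by simp
  have "Min (?L - {2}) = k"
  proof (rule Min_eqI)
    show "finite (?L - {2})" using lengths_finite by blast
    show "k \<in> ?L - {2}" using g' by auto
    fix y assume "y \<in> ?L - {2}"
    then show "k \<le> y" using g'(5) lengths_ge3[OF g'(1,2)] by blast
  qed
  then show "k \<in> daleth_star TYPE('a)" unfolding daleth_star_def using g' c by blast
qed

lemma merge_plus: "{#g, h#} \<subseteq># U \<Longrightarrow> merge (U + V) g h = merge U g h + V"
  unfolding merge_def by simp

lemma step_a: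
  assumes g: "good U V k" and k4: "4 \<le> k"
    and F: "size F = k" "\<forall>W\<in>#F. atom W" "sum_mset F = U + V"
    and W: "W \<in># F" "{#g, h#} \<subseteq># W" "{#g, h#} \<subseteq># U"
  shows "\<exists>U'. good U' V (k - 1) \<or> (good U' V k \<and> size U' < size U)"
proof -
  have g': "atom U" "atom V" "3 \<le> k" "k \<in> lengths (U + V)" "\<forall>l\<in>lengths (U + V). 3 \<le> l \<longrightarrow> k \<le> l"
    using g unfolding good_def by auto
  define U' where "U' = merge U g h"
  have aU': "atom U'" unfolding U'_def using merge_atom[OF g'(1) W(3)] .
  define F0 where "F0 = F - {#W#}"
  have FF0: "F = add_mset W F0" unfolding F0_def using W(1) by simp
  define F' where "F' = add_mset (merge W g h) F0"
  have "sum_mset F' = merge (sum_mset F) g h"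
    unfolding F'_def FF0 using merge_plus[OF W(2)] by simp
  also have "\<dots> = U' + V" unfolding U'_def F(3) using merge_plus[OF W(3)] .
  finally have sF': "sum_mset F' = U' + V" .
  have szF': "size F' = k" unfolding F'_def using F(1) FF0 by simp
  have aW: "atom W" using F(2) W(1) by blast
  have aF': "\<forall>X\<in>#F'. atom X" unfolding F'_def using F(2) FF0 merge_atom[OF aW W(2)] by simp
  have "k \<in> lengths (U' + V)" unfolding lengths_def
    using sF' szF' aF' by blast
  have ge: "\<forall>l\<in>lengths (U' + V). 3 \<le> l \<longrightarrow> k - 1 \<le> l"
  proof (intro ballI impI)
    fix l assume l: "l \<in> lengths (U' + V)" "3 \<le> l"
    have "{#g, h#} \<subseteq># U + V" using W(3) by (meson mset_subset_eq_add_left subset_mset.order_trans)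
    moreover have "l \<in> lengths (merge (U + V) g h)" using l merge_plus[OF W(3)] unfolding U'_def by simp
    ultimately have "l \<in> lengths (U + V) \<or> Suc l \<in> lengths (U + V)" by (rule unmerge)
    then show "k - 1 \<le> l" using g'(5) l(2) by fastforce
  qed
  have sz: "size U' < size U"
  proof -
    have "size (U - {#g, h#}) = size U - 2" using size_Diff_submset[OF W(3)] by simp
    moreover have "size U \<ge> 2" using size_mset_mono[OF W(3)] by simp
    ultimately show ?thesis unfolding U'_def merge_def by simp
  qed
  show ?thesis
  proof (cases "k - 1 \<in> lengths (U' + V)")
    case True
    then have "good U' V (k - 1)" unfolding good_def using aU' g'(2) k4 ge by auto
    then show ?thesis by blast
  next
    case False
    have "good U' V k" unfolding good_def
    proof (intro conjI ballI impI)
      fix l assume "l \<in> lengths (U' + V)" "3 \<le> l"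
      then have "k - 1 \<le> l" "l \<noteq> k - 1" using ge False by auto
      then show "k \<le> l" by arith
    qed (use aU' g' \<open>k \<in> lengths (U' + V)\<close> in auto)
    then show ?thesis using sz by blast
  qed
qed

lemma parts_nonempty:
  assumes aU: "atom U" and aV: "atom V"
    and P: "image_mset (\<lambda>p. fst p + snd p) P = F" "sum_mset (image_mset fst P) = U"
      "sum_mset (image_mset snd P) = V"
    and aF: "\<forall>W\<in>#F. atom W" and s2: "size F \<noteq> 2" and p: "p \<in># P"
  shows "fst p \<noteq> {#}"
proof
  assume e: "fst p = {#}"
  obtain P0 where P0: "P = add_mset p P0" using p by (metis multi_member_split)
  have Wp: "snd p \<in># F" using P(1) P0 e by auto
  then have aW: "atom (snd p)" using aF by blast
  have Vd: "V = snd p + sum_mset (image_mset snd P0)" using P(3) P0 by simp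
  then have "snd p \<subseteq># V" by simp
  then have "snd p = V" using atomD(3)[OF aV _ atomD(2)[OF aW] atomD(1)[OF aW]] by blast
  then have e2: "sum_mset (image_mset snd P0) = {#}" using Vd by simp
  have "U = sum_mset (image_mset fst P0)" using P(2) P0 e by simp
  define F0 where "F0 = image_mset (\<lambda>p. fst p + snd p) P0"
  have "sum_mset F0 = U" unfolding F0_def sum_mset_plus_image using e2 \<open>U = _\<close> by simp
  moreover have "\<forall>W\<in>#F0. atom W" using aF P(1) P0 unfolding F0_def by fastforce
  ultimately have "F0 = {#U#}" using factor_atom[OF aU] by blast
  then have "size F = 2" using P(1) P0 unfolding F0_def by (metis size_add_mset size_image_mset
        size_single One_nat_def Suc_1)
  then show False using s2 by simp
qed

lemma parts_nonempty2:
  assumes aU: "atom U" and aV: "atom V"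
    and P: "image_mset (\<lambda>p. fst p + snd p) P = F" "sum_mset (image_mset fst P) = U"
      "sum_mset (image_mset snd P) = V"
    and aF: "\<forall>W\<in>#F. atom W" and s2: "size F \<noteq> 2" and p: "p \<in># P"
  shows "snd p \<noteq> {#}"
proof -
  let ?Q = "image_mset prod.swap P"
  have "image_mset (\<lambda>p. fst p + snd p) ?Q = F" using P(1)
    by (simp add: multiset.map_comp comp_def add.commute)
  moreover have "sum_mset (image_mset fst ?Q) = V" using P(3) by (simp add: multiset.map_comp comp_def)
  moreover have "sum_mset (image_mset snd ?Q) = U" using P(2) by (simp add: multiset.map_comp comp_def)
  moreover have "prod.swap p \<in># ?Q" using p by simp
  ultimately have "fst (prod.swap p) \<noteq> {#}" using parts_nonempty[OF aV aU _ _ _ aF s2] by blast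
  then show ?thesis by simp
qed

lemma size2_sub: "2 \<le> size A \<Longrightarrow> \<exists>g h. {#g, h#} \<subseteq># A"
proof -
  assume "2 \<le> size A"
  then obtain g A1 where A1: "A = add_mset g A1" by (metis multiset_cases size_empty not_numeral_le_zero)
  then have "1 \<le> size A1" using \<open>2 \<le> size A\<close> by simp
  then obtain h A2 where "A1 = add_mset h A2" by (metis multiset_cases size_empty not_one_le_zero)
  then have "{#g, h#} \<subseteq># A" using A1 by simp
  then show ?thesis by blast
qed

lemma merge_lengths_ge:
  assumes g: "good U V k" and gh: "{#g, h#} \<subseteq># U"
  shows "\<forall>l\<in>lengths (merge U g h + V). 3 \<le> l \<longrightarrow> k - 1 \<le> l"
proof (intro ballI impI)
  have g5: "\<forall>l\<in>lengths (U + V). 3 \<le> l \<longrightarrow> k \<le> l" using g unfolding good_def by auto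
  fix l assume l: "l \<in> lengths (merge U g h + V)" "3 \<le> l"
  have "{#g, h#} \<subseteq># U + V" using gh by (meson mset_subset_eq_add_left subset_mset.order_trans)
  moreover have "l \<in> lengths (merge (U + V) g h)" using l merge_plus[OF gh] by simp
  ultimately have "l \<in> lengths (U + V) \<or> Suc l \<in> lengths (U + V)" by (rule unmerge)
  then show "k - 1 \<le> l" using g5 l(2) by fastforce
qed

lemma step_c:
  assumes g: "good U V k" and k4: "4 \<le> k"
    and P: "image_mset (\<lambda>p. fst p + snd p) P = F" "sum_mset (image_mset fst P) = U"
      "sum_mset (image_mset snd P) = V"
    and aF: "\<forall>W\<in>#F. atom W" and szF: "size F = k"
    and one: "\<forall>p\<in>#P. size (fst p) = 1 \<and> size (snd p) = 1"
  shows "\<exists>U'. good U' V (k - 1)"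
proof -
  have aU: "atom U" and aV: "atom V" using g unfolding good_def by auto
  have szP: "size P = k" using P(1) szF by (metis size_image_mset)
  then have "P \<noteq> {#}" using k4 by auto
  then obtain p1 P1 where P1: "P = add_mset p1 P1" by (metis multiset_cases)
  then have "P1 \<noteq> {#}" using szP k4 by auto
  then obtain p2 P0 where P0: "P1 = add_mset p2 P0" by (metis multiset_cases)
  have szP0: "size P0 = k - 2" using szP P1 P0 by simp
  obtain a1 where a1: "fst p1 = {#a1#}" using one P1 by (metis size_1_singleton_mset union_single_eq_member)
  obtain b1 where b1: "snd p1 = {#b1#}" using one P1 by (metis size_1_singleton_mset union_single_eq_member)
  obtain a2 where a2: "fst p2 = {#a2#}" using one P1 P0 by (metis size_1_singleton_mset union_single_eq_member add_mset_commute)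
  obtain b2 where b2: "snd p2 = {#b2#}" using one P1 P0 by (metis size_1_singleton_mset union_single_eq_member add_mset_commute)
  define U0 where "U0 = sum_mset (image_mset fst P0)"
  define V0 where "V0 = sum_mset (image_mset snd P0)"
  have U: "U = add_mset a1 (add_mset a2 U0)" using P(2) P1 P0 a1 a2 unfolding U0_def by (auto simp: add_mset_commute)
  have V: "V = add_mset b1 (add_mset b2 V0)" using P(3) P1 P0 b1 b2 unfolding V0_def by (auto simp: add_mset_commute)
  have "fst p1 + snd p1 \<in># F" using P(1) P1 by auto
  then have "atom {#a1, b1#}" using aF a1 b1 by (simp add: add_mset_commute)
  then have s1: "a1 + b1 = 0" using atomD(1) by fastforce
  have "fst p2 + snd p2 \<in># F" using P(1) P1 P0 by auto
  then have "atom {#a2, b2#}" using aF a2 b2 by (simp add: add_mset_commute)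
  then have s2: "a2 + b2 = 0" using atomD(1) by fastforce
  have "\<forall>A\<in>#image_mset fst P0. A \<noteq> {#}" using one P1 P0 by fastforce
  then have "size (image_mset fst P0) \<le> size U0" unfolding U0_def by (rule size_sum_ge)
  then have szU0: "2 \<le> size U0" using szP0 k4 by simp
  have szU: "size U = size U0 + 2" using U by simp
  have sU: "\<And>S. S \<subseteq># U \<Longrightarrow> S \<noteq> {#} \<Longrightarrow> sum_mset S = 0 \<Longrightarrow> size S = size U"
    using atomD(3)[OF aU] by metis
  have na1: "a1 \<noteq> 0"
  proof
    assume "a1 = 0"
    then have "size {#a1#} = size U" using sU[of "{#a1#}"] U by simp
    then show False using szU by simp
  qed
  have na2: "a2 \<noteq> 0"
  proof
    assume "a2 = 0"
    then have "size {#a2#} = size U" using sU[of "{#a2#}"] U by simp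
    then show False using szU by simp
  qed
  have na12: "a1 + a2 \<noteq> 0"
  proof
    assume "a1 + a2 = 0"
    then have "size {#a1, a2#} = size U" using sU[of "{#a1, a2#}"] U by simp
    then show False using szU szU0 by simp
  qed
  have b1e: "b1 = - a1" using s1 by (simp add: add_eq_0_iff)
  have b2e: "b2 = - a2" using s2 by (simp add: add_eq_0_iff)
  define X where "X = {#a1 + a2, b1, b2#}"
  have aX: "atom X" unfolding X_def b1e b2e
    by (rule atom3) (use na1 na2 na12 in \<open>auto simp: algebra_simps\<close>)
  define U' where "U' = merge U a1 a2"
  have gh: "{#a1, a2#} \<subseteq># U" using U by simp
  have U': "U' = add_mset (a1 + a2) U0" unfolding U'_def merge_def U by simp
  have aU': "atom U'" unfolding U'_def using merge_atom[OF aU gh] .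
  define F' where "F' = add_mset X (image_mset (\<lambda>p. fst p + snd p) P0)"
  have "sum_mset F' = X + U0 + V0" unfolding F'_def U0_def V0_def using sum_mset_plus_image[of fst snd P0] by (simp add: add.assoc)
  then have sF': "sum_mset F' = U' + V" unfolding U' V X_def by simp
  have szF': "size F' = k - 1" unfolding F'_def using szP0 k4 by simp
  have aF': "\<forall>W\<in>#F'. atom W" unfolding F'_def using aX aF P(1) P1 P0 by fastforce
  have kin: "k - 1 \<in> lengths (U' + V)" unfolding lengths_def using sF' szF' aF' by blast
  have ge: "\<forall>l\<in>lengths (U' + V). 3 \<le> l \<longrightarrow> k - 1 \<le> l"
    using merge_lengths_ge[OF g gh] unfolding U'_def .
  have "good U' V (k - 1)" unfolding good_def using aU' aV k4 kin ge by auto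
  then show ?thesis by blast
qed

lemma step: "good (U::'a::ab_group_add multiset) V k \<Longrightarrow> 4 \<le> k \<Longrightarrow> \<exists>U' V' :: 'a::ab_group_add multiset. good U' V' (k - 1)"
proof (induction "size U + size V" arbitrary: U V rule: less_induct)
  case less
  have g: "good U V k" and k4: "4 \<le> k" by fact+
  have aU: "atom U" and aV: "atom V" and kin: "k \<in> lengths (U + V)" using g unfolding good_def by auto
  from kin obtain F where F: "size F = k" "\<forall>W\<in>#F. atom W" "sum_mset F = U + V"
    unfolding lengths_def by blast
  from split_fact[OF F(3)] obtain P where P: "image_mset (\<lambda>p. fst p + snd p) P = F"
    "sum_mset (image_mset fst P) = U" "sum_mset (image_mset snd P) = V" by blast
  have s2: "size F \<noteq> 2" using F(1) k4 by simp
  have ne1: "\<And>p. p \<in># P \<Longrightarrow> fst p \<noteq> {#}" using parts_nonempty[OF aU aV P F(2) s2] by blast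
  have ne2: "\<And>p. p \<in># P \<Longrightarrow> snd p \<noteq> {#}" using parts_nonempty2[OF aU aV P F(2) s2] by blast
  have fstU: "\<And>p. p \<in># P \<Longrightarrow> fst p \<subseteq># U"
    using P(2) by (metis image_eqI multi_member_split set_image_mset sum_mset.insert mset_subset_eq_add_left)
  have sndV: "\<And>p. p \<in># P \<Longrightarrow> snd p \<subseteq># V"
    using P(3) by (metis image_eqI multi_member_split set_image_mset sum_mset.insert mset_subset_eq_add_left)
  have WF: "\<And>p. p \<in># P \<Longrightarrow> fst p + snd p \<in># F" unfolding P(1)[symmetric] in_image_mset by blast
  show ?case
  proof (cases "\<exists>p\<in>#P. 2 \<le> size (fst p)")
    case True
    then obtain p where p: "p \<in># P" "2 \<le> size (fst p)" by blast
    then obtain g h where gh: "{#g, h#} \<subseteq># fst p" using size2_sub by blast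
    have "{#g, h#} \<subseteq># fst p + snd p" using gh by (meson mset_subset_eq_add_left subset_mset.order_trans)
    from step_a[OF g k4 F WF[OF p(1)] this subset_mset.order_trans[OF gh fstU[OF p(1)]]]
    obtain U' where "good U' V (k - 1) \<or> (good U' V k \<and> size U' < size U)" by blast
    then show ?thesis
    proof
      assume "good U' V (k - 1)" then show ?thesis by blast
    next
      assume h: "good U' V k \<and> size U' < size U"
      then show ?thesis using less.hyps[of U' V] k4 by auto
    qed
  next
    case False1: False
    show ?thesis
    proof (cases "\<exists>p\<in>#P. 2 \<le> size (snd p)")
      case True
      then obtain p where p: "p \<in># P" "2 \<le> size (snd p)" by blast
      then obtain g h where gh: "{#g, h#} \<subseteq># snd p" using size2_sub by blast
      have "{#g, h#} \<subseteq># fst p + snd p" using gh by (meson mset_subset_eq_add_right subset_mset.order_trans)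
      moreover have "sum_mset F = V + U" using F(3) by (simp add: add.commute)
      ultimately have "\<exists>U'. good U' U (k - 1) \<or> (good U' U k \<and> size U' < size V)"
        using step_a[OF good_sym[OF g] k4 F(1,2) _ WF[OF p(1)] _ subset_mset.order_trans[OF gh sndV[OF p(1)]]]
        by blast
      then obtain V' where "good V' U (k - 1) \<or> (good V' U k \<and> size V' < size V)" by blast
      then show ?thesis
      proof
        assume "good V' U (k - 1)" then show ?thesis using good_sym by blast
      next
        assume h: "good V' U k \<and> size V' < size V"
        then show ?thesis using less.hyps[of V' U] k4 by auto
      qed
    next
      case False
      have "\<forall>p\<in>#P. size (fst p) = 1 \<and> size (snd p) = 1"
      proof
        fix p assume p: "p \<in># P"
        have a: "0 < size (fst p)" "0 < size (snd p)" using ne1[OF p] ne2[OF p] by (auto simp: nonempty_has_size)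
        have b: "size (fst p) < 2" "size (snd p) < 2" using False1 False p by auto
        from a b show "size (fst p) = 1 \<and> size (snd p) = 1" by linarith
      qed
      from step_c[OF g k4 P F(2) F(1) this] show ?thesis by blast
    qed
  qed
qed

lemma down: "good (U::'a::ab_group_add multiset) V k \<Longrightarrow> 3 \<le> j \<Longrightarrow> j \<le> k \<Longrightarrow> \<exists>U' V' :: 'a::ab_group_add multiset. good U' V' j"
proof (induction k arbitrary: U V)
  case 0 then show ?case by simp
next
  case (Suc m)
  show ?case
  proof (cases "j = Suc m")
    case True then show ?thesis using Suc.prems(1) by auto
  next
    case False
    then have "4 \<le> Suc m" "j \<le> m" using Suc.prems by auto
    from step[OF Suc.prems(1) this(1)] obtain U' V' :: "'a multiset" where "good U' V' m" by auto
    from Suc.IH[OF this Suc.prems(2) \<open>j \<le> m\<close>] show ?thesis .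
  qed
qed

lemma atom_size_le:
  assumes a: "atom (W::'a::{finite,ab_group_add} multiset)" shows "size W \<le> card (UNIV::'a set)"
proof (rule ccontr)
  assume "\<not> ?thesis"
  then have n: "card (UNIV::'a set) < size W" by simp
  obtain xs where xs: "mset xs = W" using ex_mset by blast
  let ?f = "\<lambda>i. sum_list (take i xs)"
  have "\<not> inj_on ?f {1..length xs}"
  proof
    assume "inj_on ?f {1..length xs}"
    then have "card {1..length xs} \<le> card (UNIV::'a set)" by (rule card_inj_on_le) auto
    moreover have "size W = length xs" using xs by auto
    ultimately show False using n by simp
  qed
  then obtain i j where ij: "i \<in> {1..length xs}" "j \<in> {1..length xs}" "i \<noteq> j" "?f i = ?f j"
    unfolding inj_on_def by blast
  have "\<exists>i j. 1 \<le> i \<and> i < j \<and> j \<le> length xs \<and> ?f i = ?f j"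
  proof (cases "i < j")
    case True then show ?thesis using ij by auto
  next
    case False then have "j < i" using ij(3) by simp
    then show ?thesis using ij by (metis atLeastAtMost_iff)
  qed
  then obtain i j where ij2: "1 \<le> i" "i < j" "j \<le> length xs" "?f i = ?f j" by blast
  define ys where "ys = drop i (take j xs)"
  have "take j xs = take i xs @ ys" unfolding ys_def using ij2(2)
    by (metis append_take_drop_id min.strict_order_iff take_take)
  then have "?f j = ?f i + sum_list ys" by simp
  then have s: "sum_list ys = 0" using ij2(4) by simp
  have xsd: "xs = take i xs @ ys @ drop j xs"
    using \<open>take j xs = take i xs @ ys\<close> by (metis append.assoc append_take_drop_id)
  then have "mset xs = mset ys + (mset (take i xs) + mset (drop j xs))"
    by (metis mset_append add.commute add.left_commute)
  then have sub: "mset ys \<subseteq># W" using xs by (metis mset_subset_eq_add_left)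
  have len: "length ys = j - i" unfolding ys_def using ij2 by simp
  have "mset ys \<noteq> {#}" using len ij2 by auto
  moreover have "sum_mset (mset ys) = 0" using s by (simp add: sum_mset_sum_list)
  ultimately have "mset ys = W" using atomD(3)[OF a sub] by blast
  then have "length ys = length xs" using xs by (metis size_mset)
  then show False using len ij2 by simp
qed

lemma lengths_le_card: assumes "atom (U::'a::{finite,ab_group_add} multiset)" "atom V" "l \<in> lengths (U + V)"
  shows "l \<le> 2 * card (UNIV::'a set)"
proof -
  have "l \<le> size (U + V)" using assms(3) lengths_bound[of "U + V"] by (meson atMost_iff subsetD)
  then show ?thesis using atom_size_le[OF assms(1)] atom_size_le[OF assms(2)] by simp
qed

lemma small_atom: assumes c: "card (UNIV::'a::{finite,ab_group_add} set) \<le> 2" and a: "atom (W::'a multiset)"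
  shows "count W 0 + size W = 2"
proof (cases "0 \<in># W")
  case True
  then have "{#0#} \<subseteq># W" by simp
  then have "{#0#} = W" using atomD(3)[OF a, of "{#0#}"] by simp
  then show ?thesis by auto
next
  case False
  have three: "\<And>x y z::'a. x \<noteq> y \<Longrightarrow> x \<noteq> z \<Longrightarrow> y \<noteq> z \<Longrightarrow> False"
  proof -
    fix x y z :: 'a assume d: "x \<noteq> y" "x \<noteq> z" "y \<noteq> z"
    have "card {x, y, z} \<le> card (UNIV::'a set)" by (rule card_mono) auto
    then show False using d c by simp
  qed
  obtain x W1 where W1: "W = add_mset x W1" using atomD(2)[OF a] by (metis multiset_cases)
  have x0: "x \<noteq> 0" using False W1 by auto
  have "W1 \<noteq> {#}"
  proof
    assume "W1 = {#}" then have "sum_mset W = x" using W1 by simp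
    then show False using atomD(1)[OF a] x0 by simp
  qed
  then obtain y W2 where W2: "W1 = add_mset y W2" by (metis multiset_cases)
  have y0: "y \<noteq> 0" using False W1 W2 by auto
  have yx: "y = x"
  proof (rule ccontr)
    assume "y \<noteq> x"
    show False by (rule three[of 0 x y]) (use x0 y0 \<open>y \<noteq> x\<close> in auto)
  qed
  have xx: "x + x = 0"
  proof (rule ccontr)
    assume h: "x + x \<noteq> 0"
    have "x + x \<noteq> x" using x0 by (metis add_cancel_right_right)
    then show False by (intro three[of 0 x "x + x"]) (use x0 h in auto)
  qed
  have "{#x, x#} \<subseteq># W" using W1 W2 yx by simp
  then have "{#x, x#} = W" using atomD(3)[OF a, of "{#x, x#}"] xx by simp
  then show ?thesis using x0 by auto
qed

lemma small_fact: "(\<forall>W\<in>#F. count W 0 + size W = 2) \<Longrightarrow>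
  count (sum_mset F) 0 + size (sum_mset F) = 2 * size (F :: 'a::zero multiset multiset)"
  by (induction F) auto

lemma small_empty: assumes c: "card (UNIV::'a::{finite,ab_group_add} set) \<le> 2"
  shows "daleth_star TYPE('a) = {}"
proof -
  have "\<And>k. k \<notin> daleth_star TYPE('a)"
  proof
    fix k assume "k \<in> daleth_star TYPE('a)"
    then obtain U V :: "'a multiset" where g: "good U V k" using daleth_good by blast
    then have aU: "atom U" and aV: "atom V" and k3: "3 \<le> k" and kin: "k \<in> lengths (U + V)"
      unfolding good_def by auto
    have L: "\<And>l. l \<in> lengths (U + V) \<Longrightarrow> 2 * l = count (U + V) 0 + size (U + V)"
    proof -
      fix l assume "l \<in> lengths (U + V)"
      then obtain F where F: "size F = l" "\<forall>W\<in>#F. atom W" "sum_mset F = U + V"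
        unfolding lengths_def by blast
      have "\<forall>W\<in>#F. count W 0 + size W = 2" using F(2) by (auto intro: small_atom[OF c])
      from small_fact[OF this] show "2 * l = count (U + V) 0 + size (U + V)" using F by simp
    qed
    have "2 * k = 2 * 2" using L[OF kin] L[OF two_in_lengths[OF aU aV]] by simp
    then show False using k3 by simp
  qed
  then show ?thesis by blast
qed

lemma three_in: assumes c: "3 \<le> card (UNIV::'a::{finite,ab_group_add} set)"
  shows "\<exists>U V::'a multiset. good U V 3"
proof (cases "\<exists>g::'a. g + g \<noteq> 0")
  case True
  then obtain g :: 'a where gg: "g + g \<noteq> 0" by blast
  then have g0: "g \<noteq> 0" by auto
  define U where "U = {#g, g, - (g + g)#}"
  define V where "V = {#- g, - g, g + g#}"
  have ng: "- g \<noteq> g" using gg by (metis add.left_inverse)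
  have aU: "atom U" unfolding U_def by (rule atom3) (use g0 gg ng in \<open>auto simp: algebra_simps\<close>)
  have aV: "atom V" unfolding V_def by (rule atom3) (use g0 gg ng in \<open>auto simp: algebra_simps neg_eq_iff_add_eq_0 eq_neg_iff_add_eq_0\<close>)
  define F where "F = {#{#g, - g#}, {#g, - g#}, {#- (g + g), g + g#}#}"
  have "\<forall>W\<in>#F. atom W" unfolding F_def using atom_pair[OF g0, of "- g"] atom_pair[of "- (g + g)" "g + g"] gg ng
    by auto
  moreover have "sum_mset F = U + V" unfolding F_def U_def V_def by (simp add: add_mset_commute)
  moreover have "size F = 3" unfolding F_def by simp
  ultimately have "3 \<in> lengths (U + V)" unfolding lengths_def by blast
  then have "good U V 3" unfolding good_def using aU aV by auto
  then show ?thesis by blast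
next
  case False
  then have inv: "\<And>g::'a. g + g = 0" by blast
  have "2 \<le> card (UNIV - {0::'a})" using c by (simp add: card_Diff_singleton)
  then obtain T where T: "T \<subseteq> UNIV - {0::'a}" "card T = 2" by (meson obtain_subset_with_card_n)
  then obtain x y where "T = {x, y}" "x \<noteq> y" by (meson card_2_iff)
  then have "\<exists>x y::'a. x \<noteq> 0 \<and> y \<noteq> 0 \<and> x \<noteq> y" using T(1) by blast
  then obtain x y :: 'a where xy: "x \<noteq> 0" "y \<noteq> 0" "x \<noteq> y" by blast
  have mx: "- x = x" "- y = y" using inv by (metis add_eq_0_iff)+
  have xy0: "x + y \<noteq> 0" using xy mx by (metis add_eq_0_iff)
  have e1: "x + (x + y) = y" using inv by (metis add.assoc add_0)
  have e2: "y + (x + y) = x" using inv by (metis add.commute add.left_commute add_0_right)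
  define U where "U = {#x, y, x + y#}"
  have aU: "atom U" unfolding U_def
    using atom3[OF xy(1) xy(2) xy0 xy0] e1 e2 xy inv[of "x + y"] by simp
  define F where "F = {#{#x, x#}, {#y, y#}, {#x + y, x + y#}#}"
  have "\<forall>W\<in>#F. atom W" unfolding F_def using atom_pair[OF xy(1) inv] atom_pair[OF xy(2) inv]
    atom_pair[OF xy0 inv] by auto
  moreover have "sum_mset F = U + U" unfolding F_def U_def by (simp add: add_mset_commute)
  moreover have "size F = 3" unfolding F_def by simp
  ultimately have "3 \<in> lengths (U + U)" unfolding lengths_def by blast
  then have "good U U 3" unfolding good_def using aU by auto
  then show ?thesis by blast
qed

theorem proposition3p3:
  shows "(daleth_star TYPE('a::{finite, ab_group_add}) = {} \<longleftrightarrow> card (UNIV :: 'a set) \<le> 2)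
    \<and> (card (UNIV :: 'a set) \<ge> 3 \<longrightarrow>
         (\<exists>b::nat. 3 \<le> b \<and> daleth_star TYPE('a) = {3..b}))"
proof -
  let ?D = "daleth_star TYPE('a)"
  have ge3: "\<And>k. k \<in> ?D \<Longrightarrow> 3 \<le> k" using daleth_good unfolding good_def by blast
  have bd: "\<And>k. k \<in> ?D \<Longrightarrow> k \<le> 2 * card (UNIV::'a set)"
    using daleth_good unfolding good_def by (metis lengths_le_card)
  have fin: "finite ?D" using bd by (meson finite_atMost atMost_iff subsetI finite_subset)
  have part2: "3 \<le> card (UNIV::'a set) \<Longrightarrow> 3 \<in> ?D" using three_in daleth_good by blast
  show ?thesis
  proof (intro conjI impI)
    show "(?D = {}) = (card (UNIV::'a set) \<le> 2)" using small_empty part2 by force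
    assume c: "3 \<le> card (UNIV::'a set)"
    have ne: "?D \<noteq> {}" using part2[OF c] by blast
    define b where "b = Max ?D"
    have bD: "b \<in> ?D" unfolding b_def using Max_in[OF fin ne] .
    have "?D = {3..b}"
    proof
      show "?D \<subseteq> {3..b}" using ge3 Max_ge[OF fin] unfolding b_def by auto
      show "{3..b} \<subseteq> ?D"
      proof
        fix j assume j: "j \<in> {3..b}"
        from bD obtain U V :: "'a multiset" where "good U V b" using daleth_good by blast
        then obtain U' V' :: "'a multiset" where "good U' V' j" using down[OF _ _ _, of U V b j] j by auto
        then show "j \<in> ?D" using daleth_good by blast
      qed
    qed
    then show "\<exists>b. 3 \<le> b \<and> ?D = {3..b}" using bD ge3 by blast
  qed
qed

end
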